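(* Let $C,A_1,\dots,A_M$ be real symmetric $N\times N$ matrices and $b\in\mathbb{R}^M$ with $\operatorname{Tr}(A_i^TA_j)=0$ for $i\ne j$, $\operatorname{Tr}(A_i^TC)=0$, $\|C\|_F=\|A_i\|_F=1$. Fix $c\in\mathbb{R}$ and let $S_c=\{X\succeq0:\operatorname{Tr}(A_i^TX)=b_i\ \forall i,\ \operatorname{Tr}(C^TX)=c\}$; assume $S_c$ contains a positive definite matrix and let $X_t$ be the (unique) maximizer of $\log\det X$ over $S_c$. Let $X_L\in S_c$, $X_L\succ0$, be $\epsilon_C$-optimal in the sense that $$\epsilon_C\ \ge\ (N-1)\big(\log\det X_t-\log\det X_L\big)\ \ge 0 .$$ Let $U_t,U_L$ be the Cholesky factors of $X_t,X_L$ ($X_t=U_t^TU_t$, $X_L=U_L^TU_L$). Let $K=DD_N$ and $\Phi'=\frac{2}{N+1}$, or $K=SDD_N$ and $\Phi'=1$, and let $0<\Phi<\Phi'$. Define $Q=U_t^{-T}CU_t^{-1}$, $\hat Y=I-\sqrt{\Phi}\,Q/\|Q\|_F$ and $\hat X=U_t^T\hat YU_t$. If $$\epsilon_C\le \epsilon_c^*=-\log\left(1-\left(\frac{\sqrt{\Phi'}-\sqrt{\Phi}}{\sqrt N+\sqrt{\Phi'}}\right)^3\right),$$ then the optimal value of the decrease step taken from $X_L$, $$\min_{X,Y}\operatorname{Tr}(C^TX)\ \text{s.t.}\ \operatorname{Tr}(A_i^TX)=b_i\ (i=1,\dots,M),\ X=U_L^TYU_L,\ Y\in K,$$ is at most $\operatorname{Tr}(C^T\hat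 X)$.
   Context: $X\in DD_N$ (diagonally dominant) means $X$ symmetric with $X(i,i)\ge\sum_{j\ne i}|X(i,j)|$ for all $i$; $X\in SDD_N$ (scaled diagonally dominant) means $X=DYD$ with $D$ positive diagonal and $Y\in DD_N$. Cholesky factor of $X\succ0$: upper-triangular $U$ with $X=U^TU$. *)

theory Defs
  imports "HOL-Analysis.Analysis" "HOL-Library.Extended_Real"
begin


definition sym_mat :: "real^'n^'n \<Rightarrow> bool" where
  "sym_mat X \<longleftrightarrow> transpose X = X"

definition psd :: "real^'n^'n \<Rightarrow> bool" where
  "psd X \<longleftrightarrow> sym_mat X \<and> (\<forall>v. 0 \<le> v \<bullet> (X *v v))"

definition pd :: "real^'n^'n \<Rightarrow> bool" where
  "pd X \<longleftrightarrow> sym_mat X \<and> (\<forall>v. v \<noteq> 0 \<longrightarrow> 0 < v \<bullet> (X *v v))"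

definition frob_inner :: "real^'n^'n \<Rightarrow> real^'n^'n \<Rightarrow> real" where
  "frob_inner A X = trace (transpose A ** X)"

definition frob_norm :: "real^'n^'n \<Rightarrow> real" where
  "frob_norm A = sqrt (frob_inner A A)"

definition DD :: "(real^'n^'n) set" where
  "DD = {X. sym_mat X \<and> (\<forall>i. (\<Sum>j\<in>UNIV - {i}. \<bar>X$i$j\<bar>) \<le> X$i$i)}"

definition pos_diag :: "real^'n^'n \<Rightarrow> bool" where
  "pos_diag D \<longleftrightarrow> (\<forall>i j. i \<noteq> j \<longrightarrow> D$i$j = 0) \<and> (\<forall>i. 0 < D$i$i)"

definition SDD :: "(real^'n^'n) set" where
  "SDD = {X. \<exists>D Y. pos_diag D \<and> Y \<in> DD \<and> X = D ** Y ** D}"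

definition upper_tri :: "real^('n::{finite,linorder})^('n::{finite,linorder}) \<Rightarrow> bool" where
  "upper_tri U \<longleftrightarrow> (\<forall>i j. j < i \<longrightarrow> U$i$j = 0)"

definition cholesky_factor :: "real^('n::{finite,linorder})^('n::{finite,linorder}) \<Rightarrow> real^('n::{finite,linorder})^('n::{finite,linorder}) \<Rightarrow> bool" where
  "cholesky_factor U X \<longleftrightarrow> upper_tri U \<and> X = transpose U ** U"

definition S_set :: "nat \<Rightarrow> (nat \<Rightarrow> real^'n^'n) \<Rightarrow> (nat \<Rightarrow> real) \<Rightarrow> real^'n^'n \<Rightarrow> real \<Rightarrow> (real^'n^'n) set" where
  "S_set M A b C c = {X. psd X \<and> (\<forall>i<M. frob_inner (A i) X = b i) \<and> frob_inner C X = c}"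

end

theory Submission
  imports Defs
begin


lemma sym_inner:
  fixes A :: "real^'n^'n"
  assumes "sym_mat A"
  shows "(A *v x) \<bullet> y = x \<bullet> (A *v y)"
proof -
  have "(A *v x) \<bullet> y = (x v* transpose A) \<bullet> y" by simp
  also have "\<dots> = (x v* A) \<bullet> y" using assms by (simp add: sym_mat_def)
  also have "\<dots> = x \<bullet> (A *v y)" by (rule dot_lmul_matrix)
  finally show ?thesis .
qed

lemma quad_ineq_zero:
  fixes a c :: real
  assumes "\<forall>t. 2*t*a + t^2*c \<le> 0"
  shows "a = 0"
proof (rule ccontr)
  assume "a \<noteq> 0"
  define \<tau> where "\<tau> = 1 / (\<bar>c\<bar> + 1)"
  have tp: "\<tau> > 0" unfolding \<tau>_def by (simp add: add_pos_nonneg)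
  have "2*(\<tau>*a)*a + (\<tau>*a)^2*c \<le> 0" using assms by blast
  hence "\<tau>*a^2*(2 + \<tau>*c) \<le> 0" by (simp add: algebra_simps power2_eq_square)
  moreover have "\<tau>*c \<ge> -1"
  proof -
    have "\<tau>*\<bar>c\<bar> \<le> 1" unfolding \<tau>_def by (simp add: field_simps)
    moreover have "\<tau>*c \<ge> - (\<tau>*\<bar>c\<bar>)"
    proof -
      have "-\<bar>c\<bar> \<le> c" by simp
      from mult_left_mono[OF this, of \<tau>] tp show ?thesis by simp
    qed
    ultimately show ?thesis by linarith
  qed
  moreover have "a^2 > 0" using \<open>a \<noteq> 0\<close> by simp
  ultimately have "2 + \<tau>*c > 0" "\<tau>*a^2 > 0" using tp by auto
  hence "\<tau>*a^2*(2 + \<tau>*c) > 0" by (rule mult_pos_pos[rotated])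
  thus False using \<open>\<tau>*a^2*(2 + \<tau>*c) \<le> 0\<close> by linarith
qed

lemma eigvec_exists:
  fixes A :: "real^'n^'n"
  assumes sym: "sym_mat A" and S: "subspace S" and ne: "S \<noteq> {0}"
    and inv: "\<forall>x\<in>S. A *v x \<in> S"
  shows "\<exists>v l. v \<in> S \<and> norm v = 1 \<and> A *v v = l *\<^sub>R v"
proof -
  define K where "K = S \<inter> sphere 0 1"
  have "compact K" unfolding K_def
    by (simp add: S closed_subspace compact_Int_closed Int_commute compact_sphere closed_Int_compact)
  obtain x where x: "x \<in> S" "x \<noteq> 0" using ne S subspace_0 by blast
  have "x /\<^sub>R norm x \<in> K" unfolding K_def using x S by (simp add: subspace_scale)
  hence "K \<noteq> {}" by blast
  have cont: "continuous_on K (\<lambda>y. y \<bullet> (A *v y))"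
    by (intro continuous_intros linear_continuous_on matrix_vector_mul_bounded_linear)
  obtain v where v: "v \<in> K" and vmax: "\<forall>y\<in>K. y \<bullet> (A *v y) \<le> v \<bullet> (A *v v)"
    using continuous_attains_sup[OF \<open>compact K\<close> \<open>K \<noteq> {}\<close> cont] by blast
  define l where "l = v \<bullet> (A *v v)"
  have vS: "v \<in> S" and nv: "norm v = 1" using v unfolding K_def by auto
  have bound: "y \<bullet> (A *v y) \<le> l * (norm y)^2" if "y \<in> S" for y
  proof (cases "y = 0")
    case True then show ?thesis by simp
  next
    case False
    have "y /\<^sub>R norm y \<in> K" unfolding K_def using that False S by (simp add: subspace_scale)
    hence "(y /\<^sub>R norm y) \<bullet> (A *v (y /\<^sub>R norm y)) \<le> l" using vmax l_def by blast
    hence "(y \<bullet> (A *v y)) / (norm y)^2 \<le> l"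
      by (simp add: matrix_vector_mult_scaleR inner_scaleR_left inner_scaleR_right power2_eq_square divide_simps)
    thus ?thesis using False by (simp add: divide_le_eq mult.commute)
  qed
  define w where "w = A *v v - l *\<^sub>R v"
  have wS: "w \<in> S" unfolding w_def using inv vS S by (simp add: subspace_diff subspace_scale)
  have wv: "w \<bullet> v = 0" unfolding w_def l_def using nv
    by (simp add: inner_diff_left inner_commute[of v] dot_square_norm)
  have key: "w \<bullet> (A *v v) = 0"
  proof -
    have "\<forall>t. 2*t*(w \<bullet> (A *v v)) + t^2*(w \<bullet> (A *v w) - l*(norm w)^2) \<le> 0"
    proof
      fix t :: real
      have "v + t *\<^sub>R w \<in> S" using vS wS S by (simp add: subspace_add subspace_scale)
      hence b: "(v + t *\<^sub>R w) \<bullet> (A *v (v + t *\<^sub>R w)) \<le> l * (norm (v + t *\<^sub>R w))^2" by (rule bound)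
      have e1: "(v + t *\<^sub>R w) \<bullet> (A *v (v + t *\<^sub>R w)) = l + 2*t*(w \<bullet> (A *v v)) + t^2 * (w \<bullet> (A *v w))"
        using sym_inner[OF sym, of v w] inner_commute[of "A *v v" w]
        by (simp add: matrix_vector_right_distrib matrix_vector_mult_scaleR inner_add_left inner_add_right
            l_def power2_eq_square algebra_simps inner_commute[of "A *v w" v] inner_commute[of v "A *v v"])
      have vv: "v \<bullet> v = 1" using nv by (simp add: dot_square_norm)
      have e2: "(norm (v + t *\<^sub>R w))^2 = 1 + t^2 * (norm w)^2"
      proof -
        have "(norm (v + t *\<^sub>R w))^2 = (v + t *\<^sub>R w) \<bullet> (v + t *\<^sub>R w)" by (rule power2_norm_eq_inner)
        also have "\<dots> = v \<bullet> v + 2*t*(w \<bullet> v) + t^2 * (w \<bullet> w)"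
          by (simp add: inner_add_left inner_add_right inner_commute[of v w] power2_eq_square algebra_simps)
        finally show ?thesis using vv wv by (simp add: dot_square_norm)
      qed
      show "2*t*(w \<bullet> (A *v v)) + t^2*(w \<bullet> (A *v w) - l*(norm w)^2) \<le> 0"
        using b e1 e2 by (simp add: algebra_simps)
    qed
    thus ?thesis by (rule quad_ineq_zero)
  qed
  have "w \<bullet> w = 0" using key wv
    by (metis (no_types, lifting) diff_zero inner_commute inner_diff_left inner_scaleR_left mult_zero_right w_def)
  hence "w = 0" by simp
  hence "A *v v = l *\<^sub>R v" unfolding w_def by simp
  thus ?thesis using vS nv by blast
qed

lemma spectral_aux:
  fixes A :: "real^'n^'n"
  assumes sym: "sym_mat A"
  shows "subspace S \<Longrightarrow> (\<forall>x\<in>S. A *v x \<in> S) \<Longrightarrow>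
    \<exists>B. B \<subseteq> S \<and> pairwise orthogonal B \<and> (\<forall>b\<in>B. norm b = 1 \<and> (\<exists>l. A *v b = l *\<^sub>R b)) \<and> S \<subseteq> span B"
proof (induction "dim S" arbitrary: S rule: less_induct)
  case less
  show ?case
  proof (cases "S = {0}")
    case True
    then show ?thesis by (intro exI[of _ "{}"]) auto
  next
    case False
    obtain v l where v: "v \<in> S" "norm v = 1" "A *v v = l *\<^sub>R v"
      using eigvec_exists[OF sym less.prems(1) False less.prems(2)] by blast
    define S' where "S' = S \<inter> {x. v \<bullet> x = 0}"
    have sub': "subspace S'" unfolding S'_def
      using less.prems(1) subspace_orthogonal_to_vector[of v] unfolding orthogonal_def
      by (simp add: subspace_inter)
    have inv': "\<forall>x\<in>S'. A *v x \<in> S'"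
    proof
      fix x assume x: "x \<in> S'"
      have "v \<bullet> (A *v x) = (A *v v) \<bullet> x" using sym_inner[OF sym, of v x] by simp
      also have "\<dots> = 0" using x v(3) unfolding S'_def by simp
      finally show "A *v x \<in> S'" using x less.prems(2) unfolding S'_def by auto
    qed
    have "v \<notin> S'" using v(2) unfolding S'_def by (auto simp: dot_square_norm)
    hence "S' \<subset> S" using v(1) S'_def by blast
    have "dim S' < dim S"
    proof (rule dim_psubset)
      show "span S' \<subset> span S"
      proof -
        have e1: "span S' = S'" using sub' by simp
        have e2: "span S = S" using less.prems(1) by simp
        show ?thesis using \<open>S' \<subset> S\<close> by (metis e1 e2)
      qed
    qed
    then obtain B where B: "B \<subseteq> S'" "pairwise orthogonal B"
        "\<forall>b\<in>B. norm b = 1 \<and> (\<exists>l. A *v b = l *\<^sub>R b)" "S' \<subseteq> span B"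
      using less.hyps[OF _ sub' inv'] by blast
    show ?thesis
    proof (intro exI[of _ "insert v B"] conjI)
      show "insert v B \<subseteq> S" using B(1) v(1) unfolding S'_def by auto
      show "pairwise orthogonal (insert v B)"
        using B(1,2) unfolding S'_def pairwise_insert orthogonal_def
        by (auto simp: inner_commute)
      show "\<forall>b\<in>insert v B. norm b = 1 \<and> (\<exists>l. A *v b = l *\<^sub>R b)" using B(3) v by auto
      show "S \<subseteq> span (insert v B)"
      proof
        fix x assume x: "x \<in> S"
        have "x - (v \<bullet> x) *\<^sub>R v \<in> S'" unfolding S'_def
          using x v less.prems(1) by (auto simp: subspace_diff subspace_scale inner_diff_right dot_square_norm)
        hence "x - (v \<bullet> x) *\<^sub>R v \<in> span (insert v B)" using B(4) span_mono[of B "insert v B"] by auto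
        moreover have "(v \<bullet> x) *\<^sub>R v \<in> span (insert v B)" by (simp add: span_base span_mul)
        ultimately have "(x - (v \<bullet> x) *\<^sub>R v) + (v \<bullet> x) *\<^sub>R v \<in> span (insert v B)" by (rule span_add)
        thus "x \<in> span (insert v B)" by simp
      qed
    qed
  qed
qed

definition diagm :: "('n \<Rightarrow> real) \<Rightarrow> real^'n^'n" where
  "diagm d = (\<chi> i j. if i = j then d i else 0)"

theorem spectral:
  fixes A :: "real^'n^'n"
  assumes sym: "sym_mat A"
  shows "\<exists>(V::real^'n^'n) l. transpose V ** V = mat 1 \<and> V ** transpose V = mat 1 \<and> A = V ** diagm l ** transpose V"
proof -
  obtain B where B: "pairwise orthogonal B" "\<forall>b\<in>B. norm b = 1 \<and> (\<exists>l. A *v b = l *\<^sub>R b)" "UNIV \<subseteq> span B"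
    using spectral_aux[OF sym, of UNIV] by auto
  have "0 \<notin> B" using B(2) by auto
  hence ind: "independent B" using B(1) pairwise_orthogonal_independent by blast
  hence finB: "finite B" using independent_imp_finite by blast
  have "card B = dim (UNIV :: (real^'n) set)" using basis_card_eq_dim[of B UNIV] ind B(3) by auto
  hence cB: "card B = CARD('n)" by simp
  obtain f where f: "bij_betw f (UNIV::'n set) B"
    using finite_same_card_bij[OF _ finB, of "UNIV::'n set"] cB by auto
  have fin: "f i \<in> B" for i using f by (auto simp: bij_betw_def)
  have finj: "f i = f j \<Longrightarrow> i = j" for i j using f by (auto simp: bij_betw_def inj_on_def)
  have "\<forall>i. \<exists>l. A *v f i = l *\<^sub>R f i" using B(2) fin by blast
  hence "\<exists>l. \<forall>i. A *v f i = l i *\<^sub>R f i" by (rule choice)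
  then obtain l where l: "\<And>i. A *v f i = l i *\<^sub>R f i" by blast
  define V where "V = (\<chi> i j. f j $ i)"
  have VtV: "transpose V ** V = mat 1"
  proof -
    have "(transpose V ** V) $ i $ j = f i \<bullet> f j" for i j
      unfolding V_def by (simp add: matrix_matrix_mult_def transpose_def inner_vec_def mult.commute)
    moreover have "f i \<bullet> f j = (if i = j then 1 else 0)" for i j
    proof (cases "i = j")
      case True then show ?thesis using B(2) fin by (simp add: dot_square_norm)
    next
      case False
      then have "f i \<noteq> f j" using finj by blast
      then show ?thesis using B(1) fin False unfolding pairwise_def orthogonal_def by auto
    qed
    ultimately show ?thesis by (simp add: vec_eq_iff mat_def)
  qed
  hence VVt: "V ** transpose V = mat 1" using matrix_left_right_inverse by blast
  have AV: "A ** V = V ** diagm l"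
  proof -
    have "(A ** V) $ i $ j = (V ** diagm l) $ i $ j" for i j
    proof -
      have "(A ** V) $ i $ j = (A *v f j) $ i"
        unfolding V_def by (simp add: matrix_matrix_mult_def matrix_vector_mult_def)
      also have "\<dots> = l j * f j $ i" using l by simp
      also have "\<dots> = (\<Sum>k\<in>UNIV. if k = j then f k $ i * l k else 0)" by simp
      also have "\<dots> = (\<Sum>k\<in>UNIV. f k $ i * (if k = j then l k else 0))"
        by (rule sum.cong) auto
      also have "\<dots> = (V ** diagm l) $ i $ j"
        unfolding V_def diagm_def by (simp add: matrix_matrix_mult_def)
      finally show ?thesis .
    qed
    thus ?thesis by (simp add: vec_eq_iff)
  qed
  have "A = A ** (V ** transpose V)" using VVt by simp
  also have "\<dots> = V ** diagm l ** transpose V" using AV by (simp add: matrix_mul_assoc)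
  finally show ?thesis using VtV VVt by (intro exI[of _ V] exI[of _ l]) simp
qed



definition kf :: "real \<Rightarrow> real" where "kf m = ln m - (m - 1) / m"

lemma kf_nonneg: "0 < m \<Longrightarrow> 0 \<le> kf m"
proof -
  assume m: "0 < m"
  have "ln (1/m) \<le> 1/m - 1" using m by (intro ln_le_minus_one) simp
  hence "- ln m \<le> 1/m - 1" using m by (simp add: ln_div)
  thus ?thesis unfolding kf_def using m by (simp add: field_simps)
qed

lemma kf_quad:
  assumes m: "0 < m" "m \<le> 17/10"
  shows "(m - 1)^2 / 6 \<le> kf m"
proof -
  define \<phi> where "\<phi> x = kf x - (x - 1)^2 / 6" for x
  have der: "DERIV \<phi> x :> (x - 1) * (3 - x^2) / (3 * x^2)" if "0 < x" for x
  proof -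
    have "DERIV \<phi> x :> 1/x - ((1 * x - (x - 1) * 1) / x^2) - (2 * (x - 1) * 1) / 6"
      unfolding \<phi>_def kf_def using that
      by (intro derivative_eq_intros) (auto simp: power2_eq_square)
    moreover have "1/x - ((1 * x - (x - 1) * 1) / x^2) - (2 * (x - 1) * 1) / 6 = (x - 1) * (3 - x^2) / (3 * x^2)"
      using that by (simp add: field_simps power2_eq_square)
    ultimately show ?thesis by simp
  qed
  have "\<phi> 1 = 0" unfolding \<phi>_def kf_def by simp
  show ?thesis
  proof (cases "m \<le> 1")
    case True
    have "\<phi> 1 \<le> \<phi> m"
    proof (rule DERIV_nonpos_imp_nonincreasing[OF True])
      fix x assume x: "m \<le> x" "x \<le> 1"
      hence "0 < x" using m by simp
      have "(x - 1) * (3 - x^2) \<le> 0"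
      proof (rule mult_nonpos_nonneg)
        show "x - 1 \<le> 0" using x by simp
        have "x^2 \<le> 1" using x \<open>0 < x\<close> by (simp add: abs_le_iff power_le_one)
        thus "0 \<le> 3 - x^2" by simp
      qed
      hence "(x - 1) * (3 - x^2) / (3 * x^2) \<le> 0" using \<open>0 < x\<close> by (intro divide_nonpos_pos) auto
      thus "\<exists>y. DERIV \<phi> x :> y \<and> y \<le> 0" using der[OF \<open>0 < x\<close>] by blast
    qed
    thus ?thesis using \<open>\<phi> 1 = 0\<close> unfolding \<phi>_def by simp
  next
    case False
    have "\<phi> 1 \<le> \<phi> m"
    proof (rule DERIV_nonneg_imp_nondecreasing[of 1 m \<phi>])
      show "1 \<le> m" using False by simp
      fix x assume x: "1 \<le> x" "x \<le> m"
      hence "0 < x" by simp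
      have "x^2 \<le> (17/10)^2" using x m by (intro power_mono) auto
      hence "0 \<le> (x - 1) * (3 - x^2)" using x by (intro mult_nonneg_nonneg) (auto simp: power2_eq_square)
      hence "0 \<le> (x - 1) * (3 - x^2) / (3 * x^2)" by simp
      thus "\<exists>y. DERIV \<phi> x :> y \<and> y \<ge> 0" using der[OF \<open>0 < x\<close>] by blast
    qed
    thus ?thesis using \<open>\<phi> 1 = 0\<close> unfolding \<phi>_def by simp
  qed
qed

lemma kf_mono:
  assumes "1 \<le> a" "a \<le> b"
  shows "kf a \<le> kf b"
proof (rule DERIV_nonneg_imp_nondecreasing[OF assms(2)])
  fix x assume x: "a \<le> x" "x \<le> b"
  hence "0 < x" using assms by simp
  have "DERIV kf x :> 1/x - ((1 * x - (x - 1) * 1) / x^2)"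
    unfolding kf_def using \<open>0 < x\<close> by (intro derivative_eq_intros) (auto simp: power2_eq_square)
  moreover have "1/x - ((1 * x - (x - 1) * 1) / x^2) = (x - 1) / x^2"
    using \<open>0 < x\<close> by (simp add: field_simps power2_eq_square)
  moreover have "(x - 1) / x^2 \<ge> 0" using x assms by simp
  ultimately show "\<exists>y. DERIV kf x :> y \<and> y \<ge> 0" by auto
qed

lemma kf_big: "17/10 \<le> m \<Longrightarrow> 49/600 \<le> kf m"
proof -
  assume "17/10 \<le> m"
  hence "kf (17/10) \<le> kf m" by (intro kf_mono) auto
  moreover have "(17/10 - 1)^2 / 6 \<le> kf (17/10)" by (rule kf_quad) auto
  ultimately show ?thesis by (simp add: power2_eq_square)
qed

lemma cubic_bound:
  fixes d s :: real
  assumes "0 \<le> d" "0 \<le> s" "d + s \<le> 1"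
  shows "d * (1 + s)^2 \<le> 32/27"
proof -
  have "(1 + s)^2 \<le> (2 - d)^2" using assms by (intro power_mono) auto
  hence "d * (1 + s)^2 \<le> d * (2 - d)^2" using assms by (intro mult_left_mono) auto
  also have "\<dots> \<le> 32/27"
  proof -
    have "32/27 - d * (2 - d)^2 = (d - 2/3)^2 * (8/3 - d)" by (simp add: power2_eq_square algebra_simps)
    moreover have "(d - 2/3)^2 * (8/3 - d) \<ge> 0" using assms by (intro mult_nonneg_nonneg) auto
    ultimately show ?thesis by linarith
  qed
  finally show ?thesis .
qed

lemma neg_ln_bound:
  fixes a :: real
  assumes "0 \<le> a" "a < 1"
  shows "- ln (1 - a) \<le> a / (1 - a)"
proof -
  have "ln (1 / (1 - a)) \<le> 1 / (1 - a) - 1" using ln_le_minus_one[of "1/(1-a)"] assms by simp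
  moreover have "ln (1 / (1 - a)) = - ln (1 - a)" using assms by (simp add: ln_div)
  moreover have "1 / (1 - a) - 1 = a / (1 - a)" using assms by (simp add: field_simps)
  ultimately show ?thesis by simp
qed

lemma TN_bound:
  fixes N :: nat and p :: real
  assumes "2 \<le> N" "0 \<le> p" "2 / (real N + 1) \<le> p^2"
  shows "9 \<le> (real N - 1) * (sqrt (real N) + p)^3"
proof (cases "N = 2")
  case True
  have "(4/5)^2 \<le> p^2" using assms True by (simp add: power2_eq_square)
  hence p: "4/5 \<le> p" using assms by (simp add: power_mono_iff abs_le_square_iff)
  have "sqrt ((7/5)^2) \<le> sqrt 2" by (intro real_sqrt_le_mono) (simp add: power2_eq_square)
  hence s2: "7/5 \<le> sqrt 2" by simp
  have "(11/5)^3 \<le> (sqrt 2 + p)^3" using p s2 by (intro power_mono) auto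
  thus ?thesis using True by (simp add: power3_eq_cube)
next
  case False
  hence N3: "3 \<le> N" using assms by simp
  have "sqrt ((17/10)^2) \<le> sqrt (real N)" using N3 by (intro real_sqrt_le_mono) (simp add: power2_eq_square)
  hence s3: "17/10 \<le> sqrt (real N)" by simp
  have "(17/10)^3 \<le> (sqrt (real N) + p)^3" using s3 assms by (intro power_mono) auto
  moreover have "2 \<le> real N - 1" using N3 by simp
  ultimately have "2 * (17/10)^3 \<le> (real N - 1) * (sqrt (real N) + p)^3"
    by (intro mult_mono) auto
  thus ?thesis by (simp add: power3_eq_cube)
qed

lemma scalar_main:
  fixes \<mu> :: "'n::finite \<Rightarrow> real"
  assumes pos: "\<forall>i. 0 < \<mu> i"
    and crit: "(\<Sum>i\<in>UNIV. (1 - \<mu> i) / \<mu> i) = 0"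
    and gap: "(real CARD('n) - 1) * (\<Sum>i\<in>UNIV. ln (\<mu> i)) \<le> L"
    and Lb: "L \<le> - ln (1 - ((p - s) / (sqrt (real CARD('n)) + p))^3)"
    and sp: "0 < s" "s < p" "p \<le> 1" "2 / (real CARD('n) + 1) \<le> p^2"
  shows "sqrt (\<Sum>i\<in>UNIV. (\<mu> i - 1)^2) * (1 + s) < p - s"
proof -
  define N where "N = CARD('n)"
  define d where "d = p - s"
  define D2 where "D2 = (\<Sum>i\<in>UNIV. (\<mu> i - 1)^2)"
  have dpos: "0 < d" using sp unfolding d_def by simp
  have D2nn: "0 \<le> D2" unfolding D2_def by (intro sum_nonneg) simp
  have main: "D2 * (1 + s)^2 < d^2"
  proof (cases "N = 1")
    case True
    then obtain i0 where U: "(UNIV::'n set) = {i0}" unfolding N_def by (rule card_1_singletonE)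
    have "(\<Sum>i\<in>UNIV. (1 - \<mu> i) / \<mu> i) = (1 - \<mu> i0) / \<mu> i0" unfolding U by simp
    hence "(1 - \<mu> i0) / \<mu> i0 = 0" using crit by simp
    hence "\<mu> i0 = 1" using pos[rule_format, of i0] by auto
    hence "D2 = 0" unfolding D2_def U by simp
    thus ?thesis using dpos by simp
  next
    case False
    have N2: "2 \<le> N" using False unfolding N_def using zero_less_card_finite[where 'a='n] by linarith
    define g where "g = (\<Sum>i\<in>UNIV. ln (\<mu> i))"
    have gk: "g = (\<Sum>i\<in>UNIV. kf (\<mu> i))"
    proof -
      have "(\<Sum>i\<in>UNIV. kf (\<mu> i)) = g - (\<Sum>i\<in>UNIV. (\<mu> i - 1) / \<mu> i)"
        unfolding kf_def g_def by (simp add: sum_subtractf)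
      also have "(\<Sum>i\<in>UNIV. (\<mu> i - 1) / \<mu> i) = - (\<Sum>i\<in>UNIV. (1 - \<mu> i) / \<mu> i)"
        by (simp add: sum_negf[symmetric] minus_divide_left)
      finally show ?thesis using crit by simp
    qed
    have gnn: "0 \<le> g" unfolding gk using pos by (intro sum_nonneg) (simp add: kf_nonneg)
    define E where "E = sqrt (real N) + p"
    have Epos: "0 < E" unfolding E_def using sp by (simp add: add_nonneg_pos)
    define r where "r = d / E"
    have rpos: "0 < r" unfolding r_def using dpos Epos by simp
    have s2: "7/5 \<le> sqrt (real N)"
    proof -
      have "sqrt ((7/5)^2) \<le> sqrt (real N)" using N2 by (intro real_sqrt_le_mono) (simp add: power2_eq_square)
      thus ?thesis by simp
    qed
    have r512: "r \<le> 5/12"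
    proof -
      have "d \<le> p" using sp unfolding d_def by simp
      have "12 * d \<le> 5 * E" unfolding E_def using s2 sp(3) \<open>d \<le> p\<close> by (simp only: distrib_left)
      thus ?thesis unfolding r_def using Epos by (simp add: divide_le_eq mult.commute)
    qed
    have r3: "r^3 \<le> 125/1728"
    proof -
      have "r^3 \<le> (5/12)^3" using r512 rpos by (intro power_mono) auto
      thus ?thesis by (simp add: power3_eq_cube)
    qed
    have r3pos: "0 < r^3" using rpos by simp
    have Lle: "L \<le> r^3 / (1 - r^3)"
      using Lb neg_ln_bound[of "r^3"] r3 r3pos unfolding r_def d_def E_def N_def by simp
    have N1: "1 \<le> real N - 1" using N2 by simp
    have gL: "g \<le> L / (real N - 1)"
      using gap N1 unfolding g_def N_def by (simp add: le_divide_eq mult.commute)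
    have L0: "0 \<le> L"
    proof -
      have "0 \<le> (real N - 1) * g" using N1 gnn by simp
      thus ?thesis using gap unfolding g_def N_def by linarith
    qed
    have gL2: "L / (real N - 1) \<le> L"
    proof -
      have "L * 1 \<le> L * (real N - 1)" using L0 N1 by (intro mult_left_mono) auto
      thus ?thesis using N1 by (simp add: divide_le_eq)
    qed
    have r3a: "r^3 / (1 - r^3) \<le> 10/9 * r^3"
    proof -
      have "r^3 / (1 - r^3) \<le> r^3 / (9/10)"
        using r3 r3pos by (intro divide_left_mono) auto
      thus ?thesis by simp
    qed
    have gsmall: "g < 49/600"
    proof -
      have "g \<le> 10/9 * r^3" using gL gL2 Lle r3a by linarith
      also have "\<dots> \<le> 10/9 * (125/1728)" using r3 by simp
      also have "\<dots> < 49/600" by simp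
      finally show ?thesis .
    qed
    have each: "(\<mu> i - 1)^2 \<le> 6 * kf (\<mu> i)" for i
    proof -
      have "kf (\<mu> i) \<le> g" unfolding gk
        by (rule member_le_sum) (use pos kf_nonneg in auto)
      hence "\<mu> i < 17/10" using kf_big[of "\<mu> i"] gsmall by fastforce
      thus ?thesis using kf_quad[of "\<mu> i"] pos by simp
    qed
    have D2g: "D2 \<le> 6 * g" unfolding D2_def gk sum_distrib_left by (intro sum_mono each)
    have T9: "9 \<le> (real N - 1) * E^3" unfolding E_def
      by (rule TN_bound[OF N2]) (use sp in \<open>auto simp: N_def\<close>)
    have cb: "d * (1 + s)^2 \<le> 32/27" using cubic_bound[of d s] dpos sp unfolding d_def by simp
    have "D2 * (1 + s)^2 \<le> 6 * g * (1 + s)^2" using D2g by (intro mult_right_mono) auto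
    also have "\<dots> \<le> 6 * (10/9 * r^3 / (real N - 1)) * (1 + s)^2"
    proof -
      have "g \<le> (10/9 * r^3) / (real N - 1)"
      proof -
        have "L / (real N - 1) \<le> (10/9 * r^3) / (real N - 1)"
        proof (rule divide_right_mono)
          show "L \<le> 10/9 * r^3" using Lle r3a by linarith
        qed (use N1 in auto)
        thus ?thesis using gL by linarith
      qed
      thus ?thesis by (intro mult_right_mono mult_left_mono) auto
    qed
    also have "\<dots> = (20/3) * d^2 * (d * (1 + s)^2) / ((real N - 1) * E^3)"
      unfolding r_def using Epos N1 by (simp add: field_simps power3_eq_cube power2_eq_square)
    also have "\<dots> \<le> (20/3) * d^2 * (32/27) / 9"
    proof -
      have "(20/3) * d^2 * (d * (1 + s)^2) \<le> (20/3) * d^2 * (32/27)"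
        using cb by (intro mult_left_mono) auto
      moreover have "0 \<le> (20/3) * d^2 * (32/27)" by simp
      ultimately show ?thesis using T9 by (intro frac_le) auto
    qed
    also have "\<dots> < d^2" using dpos by simp
    finally show ?thesis .
  qed
  have "sqrt D2 * (1 + s) = sqrt (D2 * (1 + s)^2)" using sp by (simp add: real_sqrt_mult)
  also have "\<dots> < sqrt (d^2)" using main by (rule real_sqrt_less_mono)
  also have "\<dots> = d" using dpos by simp
  finally show ?thesis unfolding D2_def d_def .
qed



lemma frob_inner_inner: "frob_inner (A::real^'n^'n) B = A \<bullet> B"
proof -
  have "frob_inner A B = (\<Sum>i\<in>UNIV. \<Sum>k\<in>UNIV. A $ k $ i * B $ k $ i)"
    unfolding frob_inner_def trace_def by (simp add: matrix_matrix_mult_def transpose_def)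
  also have "\<dots> = (\<Sum>k\<in>UNIV. \<Sum>i\<in>UNIV. A $ k $ i * B $ k $ i)" by (rule sum.swap)
  also have "\<dots> = A \<bullet> B" by (simp add: inner_vec_def)
  finally show ?thesis .
qed

lemma frob_norm_norm: "frob_norm (A::real^'n^'n) = norm A"
  unfolding frob_norm_def frob_inner_inner by (simp add: norm_eq_sqrt_inner)

lemma norm_sq_vec: "(norm (x::'a::real_normed_vector^'n))^2 = (\<Sum>i\<in>UNIV. (norm (x$i))^2)"
  by (simp add: norm_vec_def L2_set_def sum_nonneg)

lemma norm_mv: "norm ((B::real^'n^'n) *v v) \<le> norm B * norm v"
proof -
  have "(norm (B *v v))^2 = (\<Sum>i\<in>UNIV. (B$i \<bullet> v)^2)"
    by (simp add: norm_sq_vec matrix_vector_mul_component)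
  also have "\<dots> \<le> (\<Sum>i\<in>UNIV. (norm (B$i))^2 * (norm v)^2)"
  proof (rule sum_mono)
    fix i
    have "\<bar>B$i \<bullet> v\<bar> \<le> norm (B$i) * norm v" by (rule Cauchy_Schwarz_ineq2)
    hence "\<bar>B$i \<bullet> v\<bar>^2 \<le> (norm (B$i) * norm v)^2" by (intro power_mono) auto
    thus "(B$i \<bullet> v)^2 \<le> (norm (B$i))^2 * (norm v)^2" by (simp add: power_mult_distrib)
  qed
  also have "\<dots> = (norm B * norm v)^2" by (simp add: norm_sq_vec[of B] sum_distrib_right power_mult_distrib)
  finally show ?thesis by (rule power2_le_imp_le) simp
qed

lemma quad_bound: "\<bar>v \<bullet> ((B::real^'n^'n) *v v)\<bar> \<le> norm B * (norm v)^2"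
proof -
  have "\<bar>v \<bullet> (B *v v)\<bar> \<le> norm v * norm (B *v v)" by (rule Cauchy_Schwarz_ineq2)
  also have "\<dots> \<le> norm v * (norm B * norm v)" by (intro mult_left_mono norm_mv) simp
  finally show ?thesis by (simp add: power2_eq_square mult.commute mult.left_commute)
qed

lemma row_mm: "((B::real^'n^'n) ** G) $ i = B $ i v* G"
  by (simp add: matrix_matrix_mult_def vector_matrix_mult_def vec_eq_iff)

lemma norm_transpose: "norm (transpose (A::real^'n^'n)) = norm A"
proof -
  have "(norm (transpose A))^2 = (norm A)^2"
  proof -
    have "(norm (transpose A))^2 = (\<Sum>i\<in>UNIV. \<Sum>j\<in>UNIV. (A$j$i)^2)"
      by (simp add: norm_sq_vec transpose_def)
    also have "\<dots> = (\<Sum>j\<in>UNIV. \<Sum>i\<in>UNIV. (A$j$i)^2)" by (rule sum.swap)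
    also have "\<dots> = (norm A)^2" by (simp add: norm_sq_vec)
    finally show ?thesis .
  qed
  thus ?thesis by (simp add: power2_eq_iff_nonneg)
qed

lemma norm_mm_right:
  assumes "\<forall>x. (norm (x v* (G::real^'n^'n)))^2 \<le> lam * (norm x)^2"
  shows "(norm ((B::real^'n^'n) ** G))^2 \<le> lam * (norm B)^2"
proof -
  have "(norm (B ** G))^2 = (\<Sum>i\<in>UNIV. (norm (B$i v* G))^2)"
    by (simp add: norm_sq_vec row_mm)
  also have "\<dots> \<le> (\<Sum>i\<in>UNIV. lam * (norm (B$i))^2)" using assms by (intro sum_mono) auto
  also have "\<dots> = lam * (norm B)^2" by (simp add: norm_sq_vec[of B] sum_distrib_left)
  finally show ?thesis .
qed

lemma norm_mm_left:
  assumes "\<forall>x. (norm (x v* (G::real^'n^'n)))^2 \<le> lam * (norm x)^2"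
  shows "(norm (transpose G ** (B::real^'n^'n)))^2 \<le> lam * (norm B)^2"
proof -
  have "norm (transpose G ** B) = norm (transpose B ** G)"
    by (metis matrix_transpose_mul norm_transpose transpose_transpose)
  thus ?thesis using norm_mm_right[OF assms, of "transpose B"] by (simp add: norm_transpose)
qed

lemma orth_conj_norm:
  fixes V M :: "real^'n^'n"
  assumes "transpose V ** V = mat 1"
  shows "norm (V ** M ** transpose V) = norm M"
proof -
  have "frob_inner (V ** M ** transpose V) (V ** M ** transpose V)
        = trace (V ** (transpose M ** (transpose V ** V) ** M) ** transpose V)"
    unfolding frob_inner_def by (simp add: matrix_transpose_mul matrix_mul_assoc)
  also have "\<dots> = trace ((transpose M ** (transpose V ** V) ** M) ** transpose V ** V)"
    by (metis trace_mul_sym matrix_mul_assoc)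
  also have "\<dots> = trace ((transpose M ** M) ** (transpose V ** V))"
    using assms by (simp add: matrix_mul_assoc[symmetric])
  also have "\<dots> = frob_inner M M" using assms unfolding frob_inner_def by simp
  finally have "(V ** M ** transpose V) \<bullet> (V ** M ** transpose V) = M \<bullet> M"
    by (simp add: frob_inner_inner)
  thus ?thesis by (simp add: norm_eq_sqrt_inner)
qed

lemma norm_diagm: "(norm (diagm d :: real^'n^'n))^2 = (\<Sum>i\<in>UNIV. (d i)^2)"
proof -
  have "(norm (diagm d :: real^'n^'n))^2 = (\<Sum>i\<in>UNIV. \<Sum>j\<in>UNIV. (if i = j then d i else 0)^2)"
    by (simp add: norm_sq_vec diagm_def)
  also have "\<dots> = (\<Sum>i\<in>UNIV. (d i)^2)"
    by (simp add: if_distrib[of "\<lambda>x. x^2"] cong: if_cong)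
  finally show ?thesis .
qed

lemma det_conj:
  fixes V :: "real^'n^'n"
  assumes "transpose V ** V = mat 1"
  shows "det (V ** diagm l ** transpose V) = prod l UNIV"
proof -
  have "det (transpose V) * det V = 1" using assms det_mul[of "transpose V" V] by simp
  hence dv: "det V * det V = 1" by (simp add: det_transpose)
  have "det (diagm l :: real^'n^'n) = prod l UNIV"
    by (subst det_diagonal) (auto simp: diagm_def)
  thus ?thesis using dv by (simp add: det_mul det_transpose)
qed

lemma inv_facts:
  fixes U :: "real^'n^'n"
  assumes "invertible U"
  shows "U ** matrix_inv U = mat 1" "matrix_inv U ** U = mat 1"
proof -
  have "\<exists>A'. U ** A' = mat 1 \<and> A' ** U = mat 1" using assms unfolding invertible_def by blast
  hence "U ** matrix_inv U = mat 1 \<and> matrix_inv U ** U = mat 1"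
    unfolding matrix_inv_def by (rule someI_ex)
  thus "U ** matrix_inv U = mat 1" "matrix_inv U ** U = mat 1" by auto
qed

lemma inv_transpose_facts:
  fixes U :: "real^'n^'n"
  assumes "invertible U"
  shows "transpose U ** transpose (matrix_inv U) = mat 1" "transpose (matrix_inv U) ** transpose U = mat 1"
  using inv_facts[OF assms] by (metis matrix_transpose_mul transpose_mat)+

lemma pd_factor_invertible:
  fixes U X :: "real^'n^'n"
  assumes "pd X" "X = transpose U ** U"
  shows "invertible U" "0 < det X"
proof -
  have "inj ((*v) U)"
  proof (rule injI)
    fix x y assume "U *v x = U *v y"
    hence "U *v (x - y) = 0" by (simp add: matrix_vector_mult_diff_distrib)
    hence "(x - y) \<bullet> (X *v (x - y)) = 0" using assms(2)
      by (simp flip: matrix_vector_mul_assoc add: dot_lmul_matrix[symmetric])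
    show "x = y"
    proof (rule ccontr)
      assume "x \<noteq> y"
      hence "x - y \<noteq> 0" by simp
      hence "0 < (x - y) \<bullet> (X *v (x - y))" using assms(1) unfolding pd_def by blast
      thus False using \<open>(x - y) \<bullet> (X *v (x - y)) = 0\<close> by simp
    qed
  qed
  then obtain B where "B ** U = mat 1" using matrix_left_invertible_injective by blast
  thus iu: "invertible U" using invertible_left_inverse by blast
  have "det U \<noteq> 0" using iu invertible_det_nz by blast
  moreover have "det X = det U * det U" using assms(2) by (simp add: det_mul det_transpose)
  ultimately show "0 < det X" by (simp add: zero_less_mult_iff) (meson linorder_neqE_linordered_idom)
qed



lemma sum_if_right: fixes f :: "'n::finite \<Rightarrow> real" shows "(\<Sum>k\<in>UNIV. f k * (if k = j then c k else 0)) = f j * (c j::real)"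
proof -
  have "(\<Sum>k\<in>UNIV. f k * (if k = j then c k else 0)) = (\<Sum>k\<in>UNIV. if k = j then f k * c k else 0)"
    by (rule sum.cong) auto
  also have "\<dots> = f j * c j" using sum.delta[of UNIV j "\<lambda>k. f k * c k"] by simp
  finally show ?thesis .
qed

lemma sum_if_left: fixes f :: "'n::finite \<Rightarrow> real" shows "(\<Sum>k\<in>UNIV. (if i = k then c else 0) * f k) = c * (f i::real)"
proof -
  have "(\<Sum>k\<in>UNIV. (if i = k then c else 0) * f k) = (\<Sum>k\<in>UNIV. if i = k then c * f k else 0)"
    by (rule sum.cong) auto
  also have "\<dots> = c * f i" using sum.delta'[of UNIV i "\<lambda>k. c * f k"] by simp
  finally show ?thesis .
qed

lemma diag_entry: "(diagm a ** (A::real^'n^'n) ** diagm b) $ i $ j = a i * A$i$j * b j"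
proof -
  have "(diagm a ** A) $ i $ k = a i * A$i$k" for k
    unfolding diagm_def matrix_matrix_mult_def using sum_if_left[of i "a i" "\<lambda>l. A$l$k"] by simp
  moreover have "(diagm a ** A ** diagm b) $ i $ j = (\<Sum>k\<in>UNIV. (diagm a ** A)$i$k * (diagm b)$k$j)"
    by (simp add: matrix_matrix_mult_def)
  ultimately have "(diagm a ** A ** diagm b) $ i $ j = (\<Sum>k\<in>UNIV. (a i * A$i$k) * (if k = j then b k else 0))"
    by (simp add: diagm_def)
  also have "\<dots> = a i * A$i$j * b j" by (rule sum_if_right)
  finally show ?thesis .
qed

lemma norm_sq_mat: "(norm (A::real^'n^'n))^2 = (\<Sum>k\<in>UNIV. \<Sum>l\<in>UNIV. (A$k$l)^2)"
  by (simp add: norm_sq_vec)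

lemma row_energy:
  fixes Z :: "real^'n^'n"
  assumes sym: "sym_mat Z"
  shows "(1 - Z$i$i)^2 + 2 * (\<Sum>j\<in>UNIV-{i}. (Z$i$j)^2) \<le> (norm (Z - mat 1))^2"
proof -
  define F where "F k l = ((Z - mat 1)$k$l)^2" for k l
  have Fnn: "0 \<le> F k l" for k l unfolding F_def by simp
  have Zs: "Z$k$l = Z$l$k" for k l using sym unfolding sym_mat_def by (metis transpose_def vec_lambda_beta)
  have rowi: "(\<Sum>l\<in>UNIV. F i l) = (1 - Z$i$i)^2 + (\<Sum>j\<in>UNIV-{i}. (Z$i$j)^2)"
  proof -
    have "(\<Sum>l\<in>UNIV. F i l) = F i i + (\<Sum>l\<in>UNIV-{i}. F i l)" by (simp add: sum.remove)
    moreover have "F i i = (1 - Z$i$i)^2" unfolding F_def by (simp add: mat_def power2_commute)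
    moreover have "(\<Sum>l\<in>UNIV-{i}. F i l) = (\<Sum>j\<in>UNIV-{i}. (Z$i$j)^2)"
      unfolding F_def by (rule sum.cong) (auto simp: mat_def)
    ultimately show ?thesis by simp
  qed
  have others: "(\<Sum>j\<in>UNIV-{i}. (Z$i$j)^2) \<le> (\<Sum>k\<in>UNIV-{i}. \<Sum>l\<in>UNIV. F k l)"
  proof (rule sum_mono)
    fix k assume k: "k \<in> UNIV - {i}"
    have "(Z$i$k)^2 = F k i" unfolding F_def using k by (simp add: mat_def Zs[of i k])
    also have "\<dots> \<le> (\<Sum>l\<in>UNIV. F k l)" by (rule member_le_sum) (auto simp: Fnn)
    finally show "(Z$i$k)^2 \<le> (\<Sum>l\<in>UNIV. F k l)" .
  qed
  have "(norm (Z - mat 1))^2 = (\<Sum>k\<in>UNIV. \<Sum>l\<in>UNIV. F k l)" unfolding F_def by (rule norm_sq_mat)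
  also have "\<dots> = (\<Sum>l\<in>UNIV. F i l) + (\<Sum>k\<in>UNIV-{i}. \<Sum>l\<in>UNIV. F k l)" by (simp add: sum.remove)
  finally show ?thesis using rowi others by simp
qed

lemma dd_arith:
  fixes a S T n :: real
  assumes n: "2 \<le> n" and E: "a^2 + 2*T \<le> 2/(n+1)" and CS: "S^2 \<le> (n - 1) * T" and S0: "0 \<le> S"
    and T0: "0 \<le> T"
  shows "S \<le> 1 - a"
proof (rule ccontr)
  assume "\<not> S \<le> 1 - a"
  hence Sgt: "1 - a < S" by simp
  have "2/(n+1) \<le> 2/3" using n by (intro divide_left_mono) auto
  show False
  proof (cases "1 - a \<le> 0")
    case True
    hence "1 \<le> a" by simp
    hence "1 \<le> a^2" by (simp add: one_le_power)
    thus False using E T0 \<open>2/(n+1) \<le> 2/3\<close> by linarith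
  next
    case False
    hence "(1 - a)^2 < S^2" using Sgt by (intro power_strict_mono) auto
    hence lt: "(1 - a)^2 < (n - 1) * T" using CS by linarith
    have E2: "(n+1) * a^2 + 2*(n+1)*T \<le> 2"
    proof -
      have "(n+1) * (a^2 + 2*T) \<le> (n+1) * (2/(n+1))" using E n by (intro mult_left_mono) auto
      moreover have "(n+1) * (2/(n+1)) = 2" using n by (simp add: field_simps)
      ultimately have "(n+1) * (a^2 + 2*T) \<le> 2" by simp
      thus ?thesis by (simp add: algebra_simps)
    qed
    have "(n-1)*((n+1) * a^2 + 2*(n+1)*T) \<le> (n-1)*2" using E2 n by (intro mult_left_mono) auto
    moreover have "2*(n+1)*(1 - a)^2 < 2*(n+1)*((n - 1) * T)" using lt n by simp
    ultimately have "(n-1)*(n+1)*a^2 + 2*(n+1)*(1-a)^2 < 2*(n-1)"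
      by (simp add: algebra_simps)
    moreover have "(n-1)*(n+1)*a^2 + 2*(n+1)*(1-a)^2 - 2*(n-1) = ((n+1)*a - 2)^2"
      by (simp add: power2_eq_square algebra_simps)
    ultimately show False using zero_le_power2[of "(n+1)*a - 2"] by linarith
  qed
qed

lemma ball_DD:
  fixes Z :: "real^'n^'n"
  assumes sym: "sym_mat Z" and nb: "norm (Z - mat 1) \<le> sqrt (2 / (real CARD('n) + 1))"
  shows "Z \<in> DD"
proof -
  have "(\<Sum>j\<in>UNIV - {i}. \<bar>Z$i$j\<bar>) \<le> Z$i$i" for i
  proof -
    define S where "S = (\<Sum>j\<in>UNIV - {i}. \<bar>Z$i$j\<bar>)"
    define T where "T = (\<Sum>j\<in>UNIV - {i}. (Z$i$j)^2)"
    define n where "n = real CARD('n)"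
    have nsq: "(norm (Z - mat 1))^2 \<le> 2/(n+1)"
    proof -
      have "(norm (Z - mat 1))^2 \<le> (sqrt (2 / (real CARD('n) + 1)))^2" using nb by (intro power_mono) auto
      thus ?thesis unfolding n_def by simp
    qed
    have E: "(1 - Z$i$i)^2 + 2*T \<le> 2/(n+1)" using row_energy[OF sym, of i] nsq unfolding T_def by linarith
    have cardm: "card (UNIV - {i}) = CARD('n) - 1" by (simp add: card_Diff_singleton)
    have CS: "S^2 \<le> (n - 1) * T"
    proof -
      have "S^2 \<le> (\<Sum>j\<in>UNIV-{i}. (\<bar>Z$i$j\<bar>)^2) * real (card (UNIV - {i}))"
        unfolding S_def by (rule sum_squared_le_sum_of_squares)
      also have "real (card (UNIV - {i})) = n - 1" unfolding n_def cardm
        using zero_less_card_finite[where 'a='n] by (simp add: of_nat_diff)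
      finally show ?thesis unfolding T_def by (simp add: mult.commute)
    qed
    show ?thesis
    proof (cases "CARD('n) = 1")
      case True
      hence "card (UNIV - {i}) = 0" using cardm by simp
      hence "UNIV - {i} = ({}::'n set)" using card_0_eq[of "UNIV - {i}", OF finite] by blast
      hence "S = 0" "T = 0" unfolding S_def T_def by (simp_all only: sum.empty)
      hence "(1 - Z$i$i)^2 \<le> 1" using E True unfolding n_def by simp
      have "Z$i$i \<ge> 0"
      proof (rule ccontr)
        assume "\<not> Z$i$i \<ge> 0"
        hence "1 < 1 - Z$i$i" by simp
        hence "1 < (1 - Z$i$i)^2" by (simp add: one_less_power)
        thus False using \<open>(1 - Z$i$i)^2 \<le> 1\<close> by simp
      qed
      thus ?thesis using \<open>S = 0\<close> unfolding S_def by simp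
    next
      case False
      hence "2 \<le> n" unfolding n_def using zero_less_card_finite[where 'a='n] by linarith
      from dd_arith[OF this E CS] have "S \<le> 1 - (1 - Z$i$i)" unfolding S_def T_def by (simp add: sum_nonneg)
      thus ?thesis unfolding S_def by simp
    qed
  qed
  thus ?thesis using sym unfolding DD_def by auto
qed



lemma pd_like_inj:
  fixes M :: "real^'n^'n"
  assumes "\<forall>v. v \<noteq> 0 \<longrightarrow> 0 < v \<bullet> (M *v v)"
  shows "\<exists>x. M *v x = (\<chi> i. 1)"
proof -
  have "inj ((*v) M)"
  proof (rule injI)
    fix x y assume "M *v x = M *v y"
    hence "M *v (x - y) = 0" by (simp add: matrix_vector_mult_diff_distrib)
    show "x = y"
    proof (rule ccontr)
      assume "x \<noteq> y"
      hence "0 < (x - y) \<bullet> (M *v (x - y))" using assms by simp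
      thus False using \<open>M *v (x - y) = 0\<close> by simp
    qed
  qed
  then obtain B where "B ** M = mat 1" using matrix_left_invertible_injective by blast
  hence "M ** B = mat 1" using matrix_left_right_inverse by blast
  hence "M *v (B *v (\<chi> i. 1)) = (\<chi> i. 1)" by (simp add: matrix_vector_mul_assoc)
  thus ?thesis by blast
qed

lemma ball_SDD:
  fixes Z :: "real^'n^'n"
  assumes sym: "sym_mat Z" and nb: "norm (Z - mat 1) < 1"
  shows "Z \<in> SDD"
proof -
  have Zs: "Z$k$l = Z$l$k" for k l using sym unfolding sym_mat_def by (metis transpose_def vec_lambda_beta)
  define M :: "real^'n^'n" where "M = (\<chi> i j. if i = j then Z$i$j else - \<bar>Z$i$j\<bar>)"
  have Mij: "M$i$j = (if i = j then Z$i$j else - \<bar>Z$i$j\<bar>)" for i j unfolding M_def by simp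
  have "(norm (M - mat 1))^2 = (norm (Z - mat 1))^2"
    unfolding norm_sq_mat by (intro sum.cong refl) (auto simp: Mij mat_def)
  hence nM: "norm (M - mat 1) < 1" using nb by (simp add: power2_eq_iff_nonneg)
  have Mpd: "0 < v \<bullet> (M *v v)" if "v \<noteq> 0" for v
  proof -
    have "v \<bullet> (M *v v) = v \<bullet> v + v \<bullet> ((M - mat 1) *v v)"
      by (simp add: matrix_vector_mult_diff_rdistrib inner_diff_right)
    moreover have "\<bar>v \<bullet> ((M - mat 1) *v v)\<bar> \<le> norm (M - mat 1) * (norm v)^2" by (rule quad_bound)
    moreover have "norm (M - mat 1) * (norm v)^2 < (norm v)^2" using nM that by simp
    moreover have "v \<bullet> v = (norm v)^2" by (simp add: power2_norm_eq_inner)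
    ultimately show ?thesis by linarith
  qed
  obtain x where x: "M *v x = (\<chi> i. 1)" using pd_like_inj Mpd by blast
  have Mx: "(\<Sum>j\<in>UNIV. M$i$j * x$j) = 1" for i
    using x by (simp add: vec_eq_iff matrix_vector_mult_def)
  define v where "v = (\<chi> i. max 0 (- x$i))"
  define xp where "xp = (\<chi> i. max 0 (x$i))"
  have xdec: "x = xp - v" unfolding xp_def v_def by (simp add: vec_eq_iff max_def)
  have v0: "0 \<le> v$i" for i unfolding v_def by simp
  have "v \<bullet> (M *v xp) \<le> 0"
  proof -
    have "v \<bullet> (M *v xp) = (\<Sum>i\<in>UNIV. \<Sum>j\<in>UNIV. v$i * M$i$j * xp$j)"
      by (simp add: inner_vec_def matrix_vector_mult_def sum_distrib_left mult.assoc)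
    also have "\<dots> \<le> 0"
    proof (intro sum_nonpos)
      fix i j
      show "v$i * M$i$j * xp$j \<le> 0"
      proof (cases "i = j")
        case True
        then show ?thesis unfolding v_def xp_def by (auto simp: max_def)
      next
        case False
        have "0 \<le> v$i * xp$j" unfolding v_def xp_def by simp
        moreover have "M$i$j \<le> 0" using False by (simp add: Mij)
        ultimately show ?thesis by (metis mult.commute mult.left_commute mult_nonneg_nonpos)
      qed
    qed
    finally show ?thesis .
  qed
  moreover have "v \<bullet> (M *v x) = (\<Sum>i\<in>UNIV. v$i)"
    using x by (simp add: inner_vec_def)
  moreover have "v \<bullet> (M *v x) = v \<bullet> (M *v xp) - v \<bullet> (M *v v)"
    unfolding xdec by (simp add: matrix_vector_mult_diff_distrib inner_diff_right)
  moreover have "0 \<le> (\<Sum>i\<in>UNIV. v$i)" using v0 by (simp add: sum_nonneg)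
  ultimately have "v \<bullet> (M *v v) \<le> 0" by linarith
  hence "v = 0" using Mpd by force
  hence xnn: "0 \<le> x$i" for i
  proof -
    have "v$i = 0" using \<open>v = 0\<close> by simp
    hence "max 0 (- x$i) = 0" unfolding v_def by simp
    thus ?thesis by (simp add: max_def split: if_splits)
  qed
  have xpos: "0 < x$i" for i
  proof (rule ccontr)
    assume "\<not> 0 < x$i"
    hence xi: "x$i = 0" using xnn[of i] by simp
    have "(\<Sum>j\<in>UNIV. M$i$j * x$j) \<le> 0"
    proof (rule sum_nonpos)
      fix j show "M$i$j * x$j \<le> 0"
        using xi xnn[of j] by (cases "i = j") (auto simp: Mij mult_nonpos_nonneg)
    qed
    thus False using Mx[of i] by simp
  qed
  define Y where "Y = diagm (\<lambda>i. x$i) ** Z ** diagm (\<lambda>i. x$i)"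
  define D :: "real^'n^'n" where "D = diagm (\<lambda>i. 1 / x$i)"
  have Yij: "Y$i$j = x$i * Z$i$j * x$j" for i j unfolding Y_def by (rule diag_entry)
  have "pos_diag D" unfolding pos_diag_def D_def diagm_def using xpos by simp
  moreover have "Y \<in> DD"
  proof -
    have "sym_mat Y" unfolding sym_mat_def by (simp add: vec_eq_iff transpose_def Yij Zs mult.commute)
    moreover have "(\<Sum>j\<in>UNIV - {i}. \<bar>Y$i$j\<bar>) \<le> Y$i$i" for i
    proof -
      have split: "(\<Sum>j\<in>UNIV. M$i$j * x$j) = Z$i$i * x$i - (\<Sum>j\<in>UNIV-{i}. \<bar>Z$i$j\<bar> * x$j)"
      proof -
        have "(\<Sum>j\<in>UNIV. M$i$j * x$j) = M$i$i * x$i + (\<Sum>j\<in>UNIV-{i}. M$i$j * x$j)"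
          by (simp add: sum.remove)
        also have "(\<Sum>j\<in>UNIV-{i}. M$i$j * x$j) = - (\<Sum>j\<in>UNIV-{i}. \<bar>Z$i$j\<bar> * x$j)"
          by (simp add: sum_negf[symmetric] Mij)
        finally show ?thesis by (simp add: Mij)
      qed
      have le: "(\<Sum>j\<in>UNIV-{i}. \<bar>Z$i$j\<bar> * x$j) \<le> Z$i$i * x$i" using Mx[of i] split by simp
      have "(\<Sum>j\<in>UNIV - {i}. \<bar>Y$i$j\<bar>) = x$i * (\<Sum>j\<in>UNIV-{i}. \<bar>Z$i$j\<bar> * x$j)"
        using xpos by (simp add: Yij abs_mult sum_distrib_left mult.assoc abs_of_pos[OF xpos])
      also have "\<dots> \<le> x$i * (Z$i$i * x$i)" using le xpos[of i] by (intro mult_left_mono) auto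
      also have "\<dots> = Y$i$i" by (simp add: Yij)
      finally show ?thesis .
    qed
    ultimately show ?thesis unfolding DD_def by auto
  qed
  moreover have "Z = D ** Y ** D"
  proof -
    have "(D ** Y ** D)$i$j = Z$i$j" for i j
      unfolding D_def using diag_entry[of "\<lambda>i. 1 / x$i" Y "\<lambda>i. 1 / x$i" i j] xpos[of i] xpos[of j]
      by (simp add: Yij)
    thus ?thesis by (simp add: vec_eq_iff)
  qed
  ultimately show ?thesis unfolding SDD_def by blast
qed



lemma mm_diff_left: "(A::real^'n^'n) ** (B - C) = A ** B - A ** C"
  by (simp add: matrix_matrix_mult_def vec_eq_iff sum_subtractf algebra_simps)
lemma mm_diff_right: "((A::real^'n^'n) - B) ** C = A ** C - B ** C"
  by (simp add: matrix_matrix_mult_def vec_eq_iff sum_subtractf algebra_simps)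
lemma mm_add_left: "(A::real^'n^'n) ** (B + C) = A ** B + A ** C"
  by (simp add: matrix_matrix_mult_def vec_eq_iff sum.distrib algebra_simps)
lemma mm_add_right: "((A::real^'n^'n) + B) ** C = A ** C + B ** C"
  by (simp add: matrix_matrix_mult_def vec_eq_iff sum.distrib algebra_simps)
lemma mm_scale_left: "(k *\<^sub>R (A::real^'n^'n)) ** B = k *\<^sub>R (A ** B)"
  by (simp add: matrix_matrix_mult_def vec_eq_iff sum_distrib_left algebra_simps)
lemma mm_scale_right: "(A::real^'n^'n) ** (k *\<^sub>R B) = k *\<^sub>R (A ** B)"
  by (simp add: matrix_matrix_mult_def vec_eq_iff sum_distrib_left algebra_simps)
lemma transpose_diff': "transpose ((A::real^'n^'n) - B) = transpose A - transpose B"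
  by (simp add: transpose_def vec_eq_iff)
lemma transpose_add': "transpose ((A::real^'n^'n) + B) = transpose A + transpose B"
  by (simp add: transpose_def vec_eq_iff)
lemma transpose_scale': "transpose (k *\<^sub>R (A::real^'n^'n)) = k *\<^sub>R transpose A"
  by (simp add: transpose_def vec_eq_iff)

lemma quad_conj: "w \<bullet> ((transpose U ** P ** U) *v w) = (U *v w) \<bullet> (P *v (U *v w))"
  for U P :: "real^'n^'n"
proof -
  have "(transpose U ** P ** U) *v w = transpose U *v (P *v (U *v w))"
    by (simp add: matrix_vector_mul_assoc matrix_mul_assoc)
  hence "w \<bullet> ((transpose U ** P ** U) *v w) = w \<bullet> (transpose U *v (P *v (U *v w)))" by simp
  also have "\<dots> = (w v* transpose U) \<bullet> (P *v (U *v w))" by (rule dot_lmul_matrix[symmetric])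
  also have "\<dots> = (U *v w) \<bullet> (P *v (U *v w))" by simp
  finally show ?thesis .
qed

lemma quad_gram: "w \<bullet> ((transpose U ** U) *v w) = (U *v w) \<bullet> (U *v w)"
  for U :: "real^'n^'n"
  using quad_conj[of w U "mat 1"] by simp

lemma diagm_mv: "diagm d *v w = (\<chi> i. d i * w$i)"
  by (simp add: vec_eq_iff matrix_vector_mult_def diagm_def sum_if_left)

lemma quad_diagm: "w \<bullet> (diagm d *v w) = (\<Sum>i\<in>UNIV. d i * (w$i)^2)"
  by (simp add: diagm_mv inner_vec_def power2_eq_square mult.commute mult.left_commute)

lemma pd_diag_conj:
  fixes V :: "real^'n^'n"
  assumes d: "\<forall>i. 0 < d i" and VV: "V ** transpose V = mat 1" and w: "w \<noteq> 0"
  shows "0 < w \<bullet> ((V ** diagm d ** transpose V) *v w)"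
proof -
  define u where "u = transpose V *v w"
  have "V *v u = (V ** transpose V) *v w" unfolding u_def by (simp only: matrix_vector_mul_assoc)
  hence "V *v u = w" using VV by simp
  hence "u \<noteq> 0" using w by auto
  then obtain i where i: "u$i \<noteq> 0" by (auto simp: vec_eq_iff)
  have "w \<bullet> ((V ** diagm d ** transpose V) *v w) = u \<bullet> (diagm d *v u)"
    using quad_conj[of w "transpose V" "diagm d"] unfolding u_def by simp
  also have "\<dots> = (\<Sum>j\<in>UNIV. d j * (u$j)^2)" by (rule quad_diagm)
  also have "\<dots> \<ge> d i * (u$i)^2"
  proof (rule member_le_sum)
    fix x show "0 \<le> d x * (u$x)^2" using d[rule_format, of x] by simp
  qed simp_all
  finally show ?thesis using d i by (smt (verit) mult_pos_pos zero_less_power2)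
qed

lemma transpose_bound:
  fixes G :: "real^'n^'n"
  assumes hyp: "\<forall>v. (norm (G *v v))^2 \<le> lam * (norm v)^2"
  shows "(norm (x v* G))^2 \<le> lam * (norm x)^2"
proof -
  define y where "y = x v* G"
  have "(norm y)^2 = y \<bullet> y" by (simp add: power2_norm_eq_inner)
  also have "\<dots> = x \<bullet> (G *v y)" unfolding y_def by (rule dot_lmul_matrix)
  also have "\<dots> \<le> norm x * norm (G *v y)" by (rule norm_cauchy_schwarz)
  finally have a: "(norm y)^2 \<le> norm x * norm (G *v y)" .
  have "(norm y)^2 * (norm y)^2 \<le> (norm x)^2 * (norm (G *v y))^2"
  proof -
    have "0 \<le> (norm y)^2" by simp
    hence "((norm y)^2)^2 \<le> (norm x * norm (G *v y))^2" using a by (intro power_mono) auto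
    thus ?thesis by (simp add: power2_eq_square power_mult_distrib mult.assoc mult.left_commute)
  qed
  also have "\<dots> \<le> (norm x)^2 * (lam * (norm y)^2)" using hyp by (intro mult_left_mono) auto
  finally have b: "(norm y)^2 * (norm y)^2 \<le> (lam * (norm x)^2) * (norm y)^2" by (simp add: algebra_simps)
  show ?thesis
  proof (cases "y = 0")
    case True
    have "0 \<le> lam"
    proof -
      obtain v :: "real^'n" where "v \<noteq> 0" using zero_neq_one[where 'a="real^'n"] by blast
      hence "0 < (norm v)^2" by simp
      moreover have "0 \<le> lam * (norm v)^2" using hyp[rule_format, of v] by (smt (verit) zero_le_power2)
      ultimately show ?thesis by (simp add: zero_le_mult_iff)
    qed
    then show ?thesis using True unfolding y_def by simp
  next
    case False
    hence "0 < (norm y)^2" by simp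
    from mult_right_le_imp_le[OF b this] show ?thesis unfolding y_def .
  qed
qed



theorem theorem4p14:
  fixes C X_t X_L U_t U_L :: "real^('n::{finite,linorder})^('n::{finite,linorder})"
    and A :: "nat \<Rightarrow> real^('n::{finite,linorder})^('n::{finite,linorder})" and b :: "nat \<Rightarrow> real" and M :: nat
    and c eps_C \<Phi> \<Phi>' :: real and K :: "(real^('n::{finite,linorder})^('n::{finite,linorder})) set"
  defines "N \<equiv> CARD('n)"
  assumes symC: "sym_mat C" and symA: "\<forall>i<M. sym_mat (A i)"
    and orthA: "\<forall>i<M. \<forall>j<M. i \<noteq> j \<longrightarrow> frob_inner (A i) (A j) = 0"
    and orthC: "\<forall>i<M. frob_inner (A i) C = 0"
    and normC: "frob_norm C = 1" and normA: "\<forall>i<M. frob_norm (A i) = 1"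
    and strict_feas: "\<exists>X\<in>S_set M A b C c. pd X"
    and Xt_in: "X_t \<in> S_set M A b C c" and Xt_pd: "pd X_t"
    and Xt_max: "\<forall>X\<in>S_set M A b C c. pd X \<longrightarrow> ln (det X) \<le> ln (det X_t)"
    and XL_in: "X_L \<in> S_set M A b C c" and XL_pd: "pd X_L"
    and eps_opt: "eps_C \<ge> (real N - 1) * (ln (det X_t) - ln (det X_L))"
    and eps_nonneg: "(real N - 1) * (ln (det X_t) - ln (det X_L)) \<ge> 0"
    and Ut: "cholesky_factor U_t X_t" and UL: "cholesky_factor U_L X_L"
    and K: "(K = DD \<and> \<Phi>' = 2 / (real N + 1)) \<or> (K = SDD \<and> \<Phi>' = 1)"
    and Phi: "0 < \<Phi>" "\<Phi> < \<Phi>'"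
    and eps_small: "eps_C \<le> - ln (1 - ((sqrt \<Phi>' - sqrt \<Phi>) / (sqrt (real N) + sqrt \<Phi>')) ^ 3)"
  shows
    "let Q = transpose (matrix_inv U_t) ** C ** matrix_inv U_t;
         Yhat = mat 1 - (sqrt \<Phi> / frob_norm Q) *\<^sub>R Q;
         Xhat = transpose U_t ** Yhat ** U_t
     in Inf ((\<lambda>X. ereal (frob_inner C X)) `
              {X. (\<forall>i<M. frob_inner (A i) X = b i) \<and> (\<exists>Y\<in>K. X = transpose U_L ** Y ** U_L)})
        \<le> ereal (frob_inner C Xhat)"
proof -
  have XtU: "X_t = transpose U_t ** U_t" using Ut unfolding cholesky_factor_def by simp
  have XLU: "X_L = transpose U_L ** U_L" using UL unfolding cholesky_factor_def by simp
  have iUt: "invertible U_t" and dXt: "0 < det X_t" using pd_factor_invertible[OF Xt_pd XtU] by auto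
  have iUL: "invertible U_L" and dXL: "0 < det X_L" using pd_factor_invertible[OF XL_pd XLU] by auto
  define Ui where "Ui = matrix_inv U_t"
  define Li where "Li = matrix_inv U_L"
  have Ui1: "U_t ** Ui = mat 1" "Ui ** U_t = mat 1" using inv_facts[OF iUt] unfolding Ui_def by auto
  have Ui2: "transpose U_t ** transpose Ui = mat 1" "transpose Ui ** transpose U_t = mat 1"
    using inv_transpose_facts[OF iUt] unfolding Ui_def by auto
  have Li1: "U_L ** Li = mat 1" "Li ** U_L = mat 1" using inv_facts[OF iUL] unfolding Li_def by auto
  have Li2: "transpose U_L ** transpose Li = mat 1" "transpose Li ** transpose U_L = mat 1"
    using inv_transpose_facts[OF iUL] unfolding Li_def by auto
  define Q where "Q = transpose Ui ** C ** Ui"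
  have CQ: "C = transpose U_t ** Q ** U_t"
  proof -
    have "transpose U_t ** Q ** U_t = (transpose U_t ** transpose Ui) ** C ** (Ui ** U_t)"
      unfolding Q_def by (simp add: matrix_mul_assoc)
    thus ?thesis using Ui1 Ui2 by simp
  qed
  have nC: "norm C = 1" using normC by (simp add: frob_norm_norm)
  have Qnz: "Q \<noteq> 0"
  proof
    assume "Q = 0"
    hence "C = 0" using CQ by (simp add: matrix_matrix_mult_def vec_eq_iff)
    thus False using nC by simp
  qed
  define nQ where "nQ = norm Q"
  have nQpos: "0 < nQ" unfolding nQ_def using Qnz by simp
  define s where "s = sqrt \<Phi>"
  define p where "p = sqrt \<Phi>'"
  have s0: "0 < s" unfolding s_def using Phi by simp
  have sp: "s < p" unfolding s_def p_def using Phi by simp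
  define \<alpha> where "\<alpha> = s / nQ"
  define Yhat where "Yhat = mat 1 - \<alpha> *\<^sub>R Q"
  define Xhat where "Xhat = transpose U_t ** Yhat ** U_t"
  have XhatC: "Xhat = X_t - \<alpha> *\<^sub>R C"
    unfolding Xhat_def Yhat_def XtU CQ by (simp add: mm_diff_left mm_diff_right mm_scale_left mm_scale_right matrix_mul_assoc)
  have Xhat_cons: "\<forall>i<M. frob_inner (A i) Xhat = b i"
  proof (intro allI impI)
    fix i assume i: "i < M"
    have "frob_inner (A i) X_t = b i" using Xt_in i unfolding S_set_def by auto
    moreover have "frob_inner (A i) C = 0" using orthC i by auto
    ultimately show "frob_inner (A i) Xhat = b i"
      unfolding XhatC by (simp add: frob_inner_inner inner_diff_right)
  qed
  define Z where "Z = transpose Li ** Xhat ** Li"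
  have ZX: "Xhat = transpose U_L ** Z ** U_L"
  proof -
    have "transpose U_L ** Z ** U_L = (transpose U_L ** transpose Li) ** Xhat ** (Li ** U_L)"
      unfolding Z_def by (simp add: matrix_mul_assoc)
    thus ?thesis using Li1 Li2 by simp
  qed
  have ZK: "Z \<in> K"
  proof -
    define G where "G = U_t ** Li"
    define W where "W = transpose G ** G"
    have ZG: "Z = transpose G ** Yhat ** G"
      unfolding Z_def Xhat_def G_def by (simp add: matrix_transpose_mul matrix_mul_assoc)
    have symW: "sym_mat W" unfolding W_def sym_mat_def by (simp add: matrix_transpose_mul)
    have WX: "transpose U_L ** W ** U_L = X_t"
    proof -
      have "transpose U_L ** W ** U_L = (transpose U_L ** transpose Li) ** (transpose U_t ** U_t) ** (Li ** U_L)"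
        unfolding W_def G_def by (simp add: matrix_transpose_mul matrix_mul_assoc)
      thus ?thesis using Li1 Li2 XtU by simp
    qed
    have IX: "transpose U_L ** mat 1 ** U_L = X_L" using XLU by simp
    have Ginj: "v = 0" if "G *v v = 0" for v
    proof -
      have "U_t *v (Li *v v) = 0" using that unfolding G_def by (simp add: matrix_vector_mul_assoc)
      hence "Ui *v (U_t *v (Li *v v)) = 0" by simp
      hence "(Ui ** U_t) *v (Li *v v) = 0" by (simp add: matrix_vector_mul_assoc[symmetric])
      hence "Li *v v = 0" using Ui1 by simp
      hence "U_L *v (Li *v v) = 0" by simp
      hence "(U_L ** Li) *v v = 0" by (simp add: matrix_vector_mul_assoc[symmetric])
      thus "v = 0" using Li1 by simp
    qed
    have Wpd: "0 < v \<bullet> (W *v v)" if "v \<noteq> 0" for v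
    proof -
      have "G *v v \<noteq> 0" using Ginj that by blast
      thus ?thesis unfolding W_def quad_gram by simp
    qed
    obtain V :: "real^('n::{finite,linorder})^('n::{finite,linorder})" and \<mu> where VtV: "transpose V ** V = mat 1" and VVt: "V ** transpose V = mat 1"
      and Wdec: "W = V ** diagm \<mu> ** transpose V"
      using spectral[OF symW] by blast
    have mupos: "0 < \<mu> i" for i
    proof -
      define e :: "real^('n::{finite,linorder})" where "e = axis i 1"
      have "e \<noteq> 0" unfolding e_def by (simp add: axis_eq_0_iff)
      have "V *v e \<noteq> 0"
      proof
        assume "V *v e = 0"
        hence "transpose V *v (V *v e) = 0" by simp
        hence "(transpose V ** V) *v e = 0" by (simp add: matrix_vector_mul_assoc[symmetric])
        hence "e = 0" using VtV by simp
        thus False using \<open>e \<noteq> 0\<close> by simp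
      qed
      hence "0 < (V *v e) \<bullet> (W *v (V *v e))" by (rule Wpd)
      also have "(V *v e) \<bullet> (W *v (V *v e)) = e \<bullet> ((transpose V ** W ** V) *v e)"
        by (rule quad_conj[symmetric])
      also have "transpose V ** W ** V = diagm \<mu>"
      proof -
        have "transpose V ** W ** V = (transpose V ** V) ** diagm \<mu> ** (transpose V ** V)"
          unfolding Wdec by (simp add: matrix_mul_assoc)
        thus ?thesis using VtV by simp
      qed
      also have "e \<bullet> (diagm \<mu> *v e) = \<mu> i"
      proof -
        have "e \<bullet> (diagm \<mu> *v e) = (\<Sum>j\<in>UNIV. \<mu> j * (e$j)^2)" by (rule quad_diagm)
        also have "\<dots> = (\<Sum>j\<in>UNIV. if j = i then \<mu> j else 0)"
          unfolding e_def by (rule sum.cong) (auto simp: axis_def)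
        also have "\<dots> = \<mu> i" by simp
        finally show ?thesis .
      qed
      finally show ?thesis .
    qed
    have detW: "det W = prod \<mu> UNIV" unfolding Wdec by (rule det_conj[OF VtV])
    have detUL: "det X_L = det U_L * det U_L" using XLU by (simp add: det_mul det_transpose)
    have detXt: "det X_t = det X_L * prod \<mu> UNIV"
    proof -
      have "det X_t = det (transpose U_L) * det W * det U_L" using WX det_mul by metis
      thus ?thesis using detW detUL by (simp add: det_transpose)
    qed
    have lnprod: "ln (prod d UNIV) = (\<Sum>i\<in>UNIV. ln (d i))" if "\<forall>i. 0 < d i" for d :: "('n::{finite,linorder}) \<Rightarrow> real"
    proof (rule ln_prod)
      fix i show "d i \<noteq> 0" using that[rule_format, of i] by simp
    qed simp
    have prodpos: "0 < prod d UNIV" if "\<forall>i. 0 < d i" for d :: "('n::{finite,linorder}) \<Rightarrow> real"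
      using that by (intro prod_pos) auto
    have gdef: "ln (det X_t) - ln (det X_L) = (\<Sum>i\<in>UNIV. ln (\<mu> i))"
      using detXt dXL prodpos[of \<mu>] lnprod[of \<mu>] mupos by (simp add: ln_mult_pos)
    have crit: "(\<Sum>i\<in>UNIV. (1 - \<mu> i) / \<mu> i) = 0"
    proof -
      define m where "m = Min (range \<mu>)"
      have m0: "0 < m" unfolding m_def using mupos by (simp add: Min_gr_iff)
      have mle: "m \<le> \<mu> i" for i unfolding m_def by (rule Min_le) auto
      define S1 where "S1 = (\<Sum>i\<in>UNIV. \<bar>1 - \<mu> i\<bar>)"
      have S10: "0 \<le> S1" unfolding S1_def by (simp add: sum_nonneg)
      have S1i: "\<bar>1 - \<mu> i\<bar> \<le> S1" for i unfolding S1_def by (rule member_le_sum) auto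
      define \<tau> where "\<tau> = m / (1 + S1)"
      have tau0: "0 < \<tau>" unfolding \<tau>_def using m0 S10 by simp
      define f where "f y = (\<Sum>i\<in>UNIV. ln ((1 - y) * \<mu> i + y))" for y
      have dpos: "0 < (1 - y) * \<mu> i + y" if y: "\<bar>y\<bar> < \<tau>" for y i
      proof -
        have "\<bar>y\<bar> * \<bar>1 - \<mu> i\<bar> \<le> \<bar>y\<bar> * (1 + S1)" using S1i[of i] by (intro mult_left_mono) auto
        also have "\<dots> < \<tau> * (1 + S1)" using y S10 by (intro mult_strict_right_mono) auto
        also have "\<dots> = m" unfolding \<tau>_def using S10 by simp
        finally have "\<bar>y * (1 - \<mu> i)\<bar> < \<mu> i" using mle[of i] by (simp add: abs_mult)
        moreover have "(1 - y) * \<mu> i + y = \<mu> i + y * (1 - \<mu> i)" by (simp add: algebra_simps)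
        ultimately show ?thesis by linarith
      qed
      have local: "f y \<le> f 0" if y: "\<bar>0 - y\<bar> < \<tau>" for y
      proof -
        have y': "\<bar>y\<bar> < \<tau>" using y by simp
        define d where "d i = (1 - y) * \<mu> i + y" for i
        have d0: "\<forall>i. 0 < d i" unfolding d_def using dpos[OF y'] by blast
        define Xy where "Xy = X_t + y *\<^sub>R (X_L - X_t)"
        have dm: "diagm d = (1 - y) *\<^sub>R diagm \<mu> + y *\<^sub>R (mat 1 :: real^('n::{finite,linorder})^('n::{finite,linorder}))"
          unfolding d_def diagm_def by (simp add: vec_eq_iff mat_def)
        have Wy: "V ** diagm d ** transpose V = (1 - y) *\<^sub>R W + y *\<^sub>R mat 1"
          unfolding dm Wdec using VVt
          by (simp add: mm_add_left mm_add_right mm_scale_left mm_scale_right matrix_mul_assoc)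
        have XyW: "Xy = transpose U_L ** (V ** diagm d ** transpose V) ** U_L"
        proof -
          have "transpose U_L ** ((1 - y) *\<^sub>R W + y *\<^sub>R mat 1) ** U_L
                = (1 - y) *\<^sub>R (transpose U_L ** W ** U_L) + y *\<^sub>R (transpose U_L ** mat 1 ** U_L)"
            by (simp add: mm_add_left mm_add_right mm_scale_left mm_scale_right)
          also have "\<dots> = Xy" unfolding WX IX Xy_def by (simp add: algebra_simps)
          finally show ?thesis using Wy by simp
        qed
        have symXt: "sym_mat X_t" using Xt_pd unfolding pd_def by simp
        have symXL: "sym_mat X_L" using XL_pd unfolding pd_def by simp
        have symXy: "sym_mat Xy" using symXt symXL unfolding sym_mat_def Xy_def
          by (simp add: transpose_add' transpose_diff' transpose_scale')
        have pdXy: "pd Xy"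
        proof -
          have "0 < v \<bullet> (Xy *v v)" if "v \<noteq> 0" for v
          proof -
            have "U_L *v v \<noteq> 0"
            proof
              assume "U_L *v v = 0"
              hence "Li *v (U_L *v v) = 0" by simp
              hence "(Li ** U_L) *v v = 0" by (simp add: matrix_vector_mul_assoc[symmetric])
              thus False using Li1 that by simp
            qed
            hence "0 < (U_L *v v) \<bullet> ((V ** diagm d ** transpose V) *v (U_L *v v))"
              by (rule pd_diag_conj[OF d0 VVt])
            thus ?thesis unfolding XyW quad_conj .
          qed
          thus ?thesis using symXy unfolding pd_def by blast
        qed
        have inS: "Xy \<in> S_set M A b C c"
        proof -
          have "psd Xy" using pdXy unfolding pd_def psd_def by (metis inner_zero_left order_refl less_imp_le)
          moreover have "\<forall>i<M. frob_inner (A i) Xy = b i"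
            using Xt_in XL_in unfolding S_set_def Xy_def
            by (simp add: frob_inner_inner inner_add_right inner_diff_right)
          moreover have "frob_inner C Xy = c"
            using Xt_in XL_in unfolding S_set_def Xy_def
            by (simp add: frob_inner_inner inner_add_right inner_diff_right)
          ultimately show ?thesis unfolding S_set_def by blast
        qed
        have "ln (det Xy) \<le> ln (det X_t)" using Xt_max inS pdXy by blast
        moreover have "det Xy = det X_L * prod d UNIV"
        proof -
          have "det Xy = det (transpose U_L) * det (V ** diagm d ** transpose V) * det U_L"
            using XyW det_mul by metis
          thus ?thesis using det_conj[OF VtV, of d] detUL by (simp add: det_transpose)
        qed
        ultimately have "ln (det X_L) + (\<Sum>i\<in>UNIV. ln (d i)) \<le> ln (det X_L) + (\<Sum>i\<in>UNIV. ln (\<mu> i))"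
          using gdef dXL prodpos[OF d0] lnprod[OF d0] by (simp add: ln_mult_pos)
        thus "f y \<le> f 0" unfolding f_def d_def by simp
      qed
      have der: "DERIV f 0 :> (\<Sum>i\<in>UNIV. (1 - \<mu> i) / \<mu> i)"
        unfolding f_def
      proof (rule DERIV_sum)
        fix i
        have "DERIV (\<lambda>y. ln ((1 - y) * \<mu> i + y)) 0 :> (1 / ((1 - 0) * \<mu> i + 0)) * ((0 - 1) * \<mu> i + 1)"
          using mupos[of i] by (intro derivative_eq_intros DERIV_chain2[OF DERIV_ln_divide]) (auto intro!: derivative_eq_intros)
        thus "DERIV (\<lambda>y. ln ((1 - y) * \<mu> i + y)) 0 :> (1 - \<mu> i) / \<mu> i" by simp
      qed
      show ?thesis using DERIV_local_max[OF der tau0] local by blast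
    qed
    have N1: "1 \<le> real N" unfolding N_def using zero_less_card_finite[where 'a='n] by linarith
    have frac1: "2 / (real N + 1) \<le> 1" using N1 by simp
    have Phi'le: "\<Phi>' \<le> 1" and Phi'ge: "2 / (real N + 1) \<le> \<Phi>'" using K frac1 by auto
    have Phi'pos: "0 < \<Phi>'" using Phi by simp
    have p1: "p \<le> 1" unfolding p_def using Phi'le by simp
    have p2: "p^2 = \<Phi>'" unfolding p_def using Phi'pos by simp
    have gap: "(real CARD('n) - 1) * (\<Sum>i\<in>UNIV. ln (\<mu> i)) \<le> eps_C"
      using eps_opt gdef unfolding N_def by simp
    have sc: "sqrt (\<Sum>i\<in>UNIV. (\<mu> i - 1)^2) * (1 + s) < p - s"
    proof (rule scalar_main[of \<mu> eps_C p s])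
      show "\<forall>i. 0 < \<mu> i" using mupos by simp
      show "(\<Sum>i\<in>UNIV. (1 - \<mu> i) / \<mu> i) = 0" by (rule crit)
      show "(real CARD('n) - 1) * (\<Sum>i\<in>UNIV. ln (\<mu> i)) \<le> eps_C" by (rule gap)
      show "eps_C \<le> - ln (1 - ((p - s) / (sqrt (real CARD('n)) + p))^3)"
        using eps_small unfolding p_def s_def N_def .
      show "0 < s" "s < p" "p \<le> 1" by (fact s0, fact sp, fact p1)
      show "2 / (real CARD('n) + 1) \<le> p^2" using Phi'ge p2 unfolding N_def by simp
    qed
    have WI: "W - mat 1 = V ** diagm (\<lambda>i. \<mu> i - 1) ** transpose V"
    proof -
      have "diagm (\<lambda>i. \<mu> i - 1) = diagm \<mu> - (mat 1 :: real^('n::{finite,linorder})^('n::{finite,linorder}))"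
        unfolding diagm_def by (simp add: vec_eq_iff mat_def)
      hence "V ** diagm (\<lambda>i. \<mu> i - 1) ** transpose V = V ** diagm \<mu> ** transpose V - V ** transpose V"
        by (simp add: mm_diff_left mm_diff_right)
      thus ?thesis using Wdec VVt by simp
    qed
    define \<delta> where "\<delta> = norm (W - mat 1)"
    have \<delta>eq: "\<delta> = sqrt (\<Sum>i\<in>UNIV. (\<mu> i - 1)^2)"
    proof -
      have "\<delta> = norm (diagm (\<lambda>i. \<mu> i - 1) :: real^('n::{finite,linorder})^('n::{finite,linorder}))"
        unfolding \<delta>_def WI by (rule orth_conj_norm[OF VtV])
      also have "\<dots> = sqrt ((norm (diagm (\<lambda>i. \<mu> i - 1) :: real^('n::{finite,linorder})^('n::{finite,linorder})))^2)"
        by simp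
      also have "\<dots> = sqrt (\<Sum>i\<in>UNIV. (\<mu> i - 1)^2)" by (simp only: norm_diagm)
      finally show ?thesis .
    qed
    have \<delta>0: "0 \<le> \<delta>" unfolding \<delta>_def by simp
    have Gb: "\<forall>v. (norm (G *v v))^2 \<le> (1 + \<delta>) * (norm v)^2"
    proof
      fix v
      have "(norm (G *v v))^2 = v \<bullet> (W *v v)" unfolding W_def quad_gram by (simp add: power2_norm_eq_inner)
      also have "\<dots> = v \<bullet> v + v \<bullet> ((W - mat 1) *v v)"
        by (simp add: matrix_vector_mult_diff_rdistrib inner_diff_right)
      also have "\<dots> \<le> (norm v)^2 + \<delta> * (norm v)^2"
        using quad_bound[of v "W - mat 1"] unfolding \<delta>_def by (simp add: power2_norm_eq_inner)
      finally show "(norm (G *v v))^2 \<le> (1 + \<delta>) * (norm v)^2" by (simp add: algebra_simps)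
    qed
    have GTb: "\<forall>x. (norm (x v* G))^2 \<le> (1 + \<delta>) * (norm x)^2"
    proof
      fix x show "(norm (x v* G))^2 \<le> (1 + \<delta>) * (norm x)^2" by (rule transpose_bound[OF Gb])
    qed
    have nGQG: "norm (transpose G ** Q ** G) \<le> (1 + \<delta>) * nQ"
    proof -
      have a: "(norm (transpose G ** (Q ** G)))^2 \<le> (1 + \<delta>) * (norm (Q ** G))^2" by (rule norm_mm_left[OF GTb])
      have b: "(norm (Q ** G))^2 \<le> (1 + \<delta>) * (norm Q)^2" by (rule norm_mm_right[OF GTb])
      have c: "(1 + \<delta>) * (norm (Q ** G))^2 \<le> (1 + \<delta>) * ((1 + \<delta>) * (norm Q)^2)"
        by (rule mult_left_mono[OF b]) (use \<delta>0 in simp)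
      have eq: "(1 + \<delta>) * ((1 + \<delta>) * (norm Q)^2) = ((1 + \<delta>) * nQ)^2" unfolding nQ_def by (simp add: power2_eq_square)
      have tr: "transpose G ** Q ** G = transpose G ** (Q ** G)" by (simp add: matrix_mul_assoc)
      have "(norm (transpose G ** Q ** G))^2 \<le> ((1 + \<delta>) * nQ)^2" unfolding tr using a c eq by linarith
      thus ?thesis by (rule power2_le_imp_le) (use \<delta>0 nQpos in simp)
    qed
    have ZI: "Z - mat 1 = (W - mat 1) - \<alpha> *\<^sub>R (transpose G ** Q ** G)"
      unfolding ZG Yhat_def W_def by (simp add: mm_diff_left mm_diff_right mm_scale_left mm_scale_right matrix_mul_assoc)
    have anQ: "\<alpha> * nQ = s" unfolding \<alpha>_def using nQpos by simp
    have \<alpha>0: "0 \<le> \<alpha>" unfolding \<alpha>_def using s0 nQpos by simp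
    have nZ: "norm (Z - mat 1) < p"
    proof -
      have "norm (Z - mat 1) \<le> \<delta> + \<alpha> * norm (transpose G ** Q ** G)"
        unfolding ZI \<delta>_def using norm_triangle_ineq4[of "W - mat 1" "\<alpha> *\<^sub>R (transpose G ** Q ** G)"] \<alpha>0
        by simp
      also have "\<dots> \<le> \<delta> + \<alpha> * ((1 + \<delta>) * nQ)" using nGQG \<alpha>0 by (intro add_left_mono mult_left_mono) auto
      also have "\<dots> = \<delta> * (1 + s) + s" using anQ by (simp add: algebra_simps)
      also have "\<dots> < p" using sc \<delta>eq by simp
      finally show ?thesis .
    qed
    have symZ: "sym_mat Z"
    proof -
      have symC': "transpose C = C" using symC unfolding sym_mat_def .
      have "transpose Q = Q" unfolding Q_def using symC' by (simp add: matrix_transpose_mul matrix_mul_assoc)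
      hence "transpose Yhat = Yhat" unfolding Yhat_def by (simp add: transpose_diff' transpose_scale')
      thus ?thesis unfolding sym_mat_def ZG by (simp add: matrix_transpose_mul matrix_mul_assoc)
    qed
    show ?thesis
      using K
    proof
      assume KD: "K = DD \<and> \<Phi>' = 2 / (real N + 1)"
      have "norm (Z - mat 1) \<le> sqrt (2 / (real CARD('n) + 1))"
        using nZ KD unfolding p_def N_def by simp
      thus ?thesis using ball_DD[OF symZ] KD by simp
    next
      assume KS: "K = SDD \<and> \<Phi>' = 1"
      have "norm (Z - mat 1) < 1" using nZ KS unfolding p_def by simp
      thus ?thesis using ball_SDD[OF symZ] KS by simp
    qed
  qed
  have mem: "Xhat \<in> {X. (\<forall>i<M. frob_inner (A i) X = b i) \<and> (\<exists>Y\<in>K. X = transpose U_L ** Y ** U_L)}"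
    using Xhat_cons ZX ZK by blast
  have "Inf ((\<lambda>X. ereal (frob_inner C X)) `
              {X. (\<forall>i<M. frob_inner (A i) X = b i) \<and> (\<exists>Y\<in>K. X = transpose U_L ** Y ** U_L)})
        \<le> ereal (frob_inner C Xhat)"
    by (rule Inf_lower) (use mem in blast)
  thus ?thesis unfolding Let_def Xhat_def Yhat_def \<alpha>_def s_def nQ_def Q_def Ui_def frob_norm_norm .
qed

end
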